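(* Let $P_L$ be a probability law on $\{1,\dots,\bar L\}$. For a weight function $g$ and an activation $\sigma$ define $$\tilde{\mathcal E}_\sigma(m_k,m_v,R_k,R_v)=\mathbb E_L\,\mathbb E_{\epsilon,\chi,\xi}\,g(\epsilon,\chi)\Big[1-2m_v\,\sigma(m_k\chi+R_k\xi)_\epsilon+(m_v^2+R_v^2)\,\sigma(m_k\chi+R_k\xi)^\top\sigma(m_k\chi+R_k\xi)\Big],$$ where $L\sim P_L$ and, given $L$, $\epsilon\sim\mathrm{Unif}(\{1,\dots,L\})$, $\chi,\xi\sim\mathcal N(0,I_L)$ independent, and let $\mathsf E_\sigma=\inf_{\mathbb R^4}\tilde{\mathcal E}_\sigma$. Let $\sigma_{\mathrm{lin}}(x)_\ell=1+x_\ell$ and $\sigma_{\mathrm{softmax}}(x)_\ell=e^{x_\ell}/\sum_{\ell'=1}^Le^{x_{\ell'}}$, and write $\mathsf E_{\mathrm{lin}},\mathsf E_{\mathrm{softmax}}$ for the corresponding values. (i) For $g(\epsilon,\chi)=L\,\mathbb 1_{\epsilon=\arg\max_\ell\chi_\ell}$, letting $f(L)=\mathbb E_{\chi\sim\mathcal N(0,I_L)}\max_{1\le\ell\le L}\chi_\ell$, $$\mathsf E_{\mathrm{lin}}=1-\frac{1+(\mathbb E_Lf(L))^2}{\mathbb E_LL}\ \ge\ 1-\frac{1+f(\mathbb E_LL)^2}{\mathbb E_LL}.$$ (ii) For $g\equiv1$, $\mathsf E_{\mathrm{lin}}=1-\frac1{\mathbb E_LL}$ and $\mathsf E_{\mathrm{softmax}}=1-\mathbb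 E_L\frac1L$; consequently $\mathsf E_{\mathrm{lin}}\ge\mathsf E_{\mathrm{softmax}}$, with equality when $\mathrm{Var}(L)=0$.
   Context: In (i), $f$ is defined on positive integers; $f(\mathbb E_LL)$ for non-integer $\mathbb E_LL$ is understood via the piecewise-linear interpolation of $f$ between consecutive integers. *)

theory Defs
  imports "HOL-Probability.Probability"
begin

definition gauss :: "nat \<Rightarrow> (nat \<Rightarrow> real) measure" where
  "gauss L = PiM {1..L} (\<lambda>_. density lborel (normal_density 0 1))"

text \<open>Activation: sigma L x gives the vector sigma(x) in R^L (coordinates 1..L).\<close>
type_synonym act = "nat \<Rightarrow> (nat \<Rightarrow> real) \<Rightarrow> nat \<Rightarrow> real"
text \<open>Weight function g L eps chi.\<close>
type_synonym weight = "nat \<Rightarrow> nat \<Rightarrow> (nat \<Rightarrow> real) \<Rightarrow> real"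

definition sigma_lin :: act where
  "sigma_lin L x l = 1 + x l"

definition sigma_softmax :: act where
  "sigma_softmax L x l = exp (x l) / (\<Sum>l'\<in>{1..L}. exp (x l'))"

text \<open>Expectation over L ~ P_L, where P_L is given by weights p on {1..Lbar}.\<close>
definition EL :: "(nat \<Rightarrow> real) \<Rightarrow> nat \<Rightarrow> (nat \<Rightarrow> real) \<Rightarrow> real" where
  "EL p Lbar h = (\<Sum>L\<in>{1..Lbar}. p L * h L)"

definition Etil :: "(nat \<Rightarrow> real) \<Rightarrow> nat \<Rightarrow> act \<Rightarrow> weight \<Rightarrow>
    real \<Rightarrow> real \<Rightarrow> real \<Rightarrow> real \<Rightarrow> real" where
  "Etil p Lbar \<sigma> g mk mv Rk Rv = EL p Lbar (\<lambda>L.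
     (1 / real L) * (\<Sum>\<epsilon>\<in>{1..L}.
        \<integral>z. (let s = \<sigma> L (\<lambda>l. mk * fst z l + Rk * snd z l) in
              g L \<epsilon> (fst z) * (1 - 2 * mv * s \<epsilon> + (mv\<^sup>2 + Rv\<^sup>2) * (\<Sum>l\<in>{1..L}. (s l)\<^sup>2)))
          \<partial>(gauss L \<Otimes>\<^sub>M gauss L)))"

definition Eopt :: "(nat \<Rightarrow> real) \<Rightarrow> nat \<Rightarrow> act \<Rightarrow> weight \<Rightarrow> real" where
  "Eopt p Lbar \<sigma> g = Inf {Etil p Lbar \<sigma> g mk mv Rk Rv | mk mv Rk Rv. True}"

text \<open>g(eps,chi) = L * 1[eps = argmax chi] (ties have probability zero).\<close>
definition g_argmax :: weight where
  "g_argmax L \<epsilon> c = real L * (if c \<epsilon> = Max (c ` {1..L}) then 1 else 0)"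

definition g_one :: weight where
  "g_one L \<epsilon> c = 1"

definition fmax :: "nat \<Rightarrow> real" where
  "fmax L = (\<integral>c. Max (c ` {1..L}) \<partial>gauss L)"

definition fmax_interp :: "real \<Rightarrow> real" where
  "fmax_interp x = (let n = nat \<lfloor>x\<rfloor> in
     fmax n + (x - real n) * (fmax (Suc n) - fmax n))"

end

theory Submission
  imports Defs
begin


abbreviation SN :: "real measure" where "SN \<equiv> density lborel (normal_density 0 1)"

lemma SN_prob: "prob_space SN" by (rule prob_space_normal_density) simp

lemma sets_SN[simp, measurable_cong]: "sets SN = sets borel" by simp
lemma space_SN[simp]: "space SN = UNIV" by simp

lemma SN_integrable_iff: "f \<in> borel_measurable borel \<Longrightarrow>
   integrable SN f \<longleftrightarrow> integrable lborel (\<lambda>x. normal_density 0 1 x * f x)"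
  by (subst integrable_density) auto

lemma SN_integral: "f \<in> borel_measurable borel \<Longrightarrow>
   integral\<^sup>L SN f = integral\<^sup>L lborel (\<lambda>x. normal_density 0 1 x * f x)"
  by (subst integral_density) auto

lemma SN_int1: "integrable SN (\<lambda>x. x)"
  using integrable_std_normal_moment[of 1] by (subst SN_integrable_iff) auto
lemma SN_int2: "integrable SN (\<lambda>x. x^2)"
  using integrable_std_normal_moment[of 2] by (subst SN_integrable_iff) auto
lemma SN_intabs: "integrable SN (\<lambda>x. \<bar>x\<bar>)"
  using SN_int1 by simp
lemma SN_mean: "integral\<^sup>L SN (\<lambda>x. x) = 0"
  using integral_std_normal_moment_odd[of 0] by (subst SN_integral) auto
lemma SN_var: "integral\<^sup>L SN (\<lambda>x. x^2) = 1"
  using integral_std_normal_moment_even[of 1] by (subst SN_integral) auto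

lemma SN_singleton: "emeasure SN {a} = 0"
proof -
  have "emeasure SN {a} = (\<integral>\<^sup>+x. ennreal (normal_density 0 1 x) * indicator {a} x \<partial>lborel)"
    by (rule emeasure_density) auto
  also have "\<dots> = 0"
    by (rule nn_integral_null_set) auto
  finally show ?thesis .
qed




interpretation SNP: product_sigma_finite "\<lambda>_::nat. SN"
  by (simp add: product_sigma_finite_def SN_prob prob_space_imp_sigma_finite)

lemma gauss_prob: "prob_space (gauss L)"
  unfolding gauss_def by (intro prob_space_PiM SN_prob)

lemma space_gauss: "space (gauss L) = PiE {1..L} (\<lambda>_. UNIV)"
  unfolding gauss_def by (simp add: space_PiM)

lemma gauss_comp_SN: "l \<in> {1..L} \<Longrightarrow> (\<lambda>x. x l) \<in> measurable (gauss L) SN"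
  unfolding gauss_def by (rule measurable_component_singleton)

lemma gauss_comp_meas[measurable]: "l \<in> {1..L} \<Longrightarrow> (\<lambda>x. x l) \<in> borel_measurable (gauss L)"
  using gauss_comp_SN[of l L] measurable_cong_sets[OF refl sets_SN] by blast

lemma distr_gauss: "l \<in> {1..L} \<Longrightarrow> distr (gauss L) SN (\<lambda>x. x l) = SN"
  unfolding gauss_def by (rule distr_PiM_component) (auto simp: SN_prob)

lemma gauss_coord_integrable:
  fixes h :: "real \<Rightarrow> real"
  assumes l: "l \<in> {1..L}" and h[measurable]: "h \<in> borel_measurable borel" and i: "integrable SN h"
  shows "integrable (gauss L) (\<lambda>x. h (x l))"
proof -
  have hS: "h \<in> borel_measurable SN" using h measurable_cong_sets[OF sets_SN refl] by blast
  have "integrable (distr (gauss L) SN (\<lambda>x. x l)) h" using distr_gauss[OF l] i by simp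
  then show ?thesis
    using integrable_distr_eq[OF gauss_comp_SN[OF l] hS] by simp
qed

lemma gauss_coord_integral:
  fixes h :: "real \<Rightarrow> real"
  assumes l: "l \<in> {1..L}" and h[measurable]: "h \<in> borel_measurable borel"
  shows "integral\<^sup>L (gauss L) (\<lambda>x. h (x l)) = integral\<^sup>L SN h"
proof -
  have hS: "h \<in> borel_measurable SN" using h measurable_cong_sets[OF sets_SN refl] by blast
  have "integral\<^sup>L SN h = integral\<^sup>L (distr (gauss L) SN (\<lambda>x. x l)) h" using distr_gauss[OF l] by simp
  also have "\<dots> = integral\<^sup>L (gauss L) (\<lambda>x. h (x l))"
    by (rule integral_distr[OF gauss_comp_SN[OF l] hS])
  finally show ?thesis by simp
qed




lemma pair_prod:
  fixes f g :: "_ \<Rightarrow> real"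
  assumes M1: "sigma_finite_measure M1" and M2: "sigma_finite_measure M2"
    and f: "integrable M1 f" and g: "integrable M2 g"
  shows "integrable (M1 \<Otimes>\<^sub>M M2) (\<lambda>z. f (fst z) * g (snd z))"
    "integral\<^sup>L (M1 \<Otimes>\<^sub>M M2) (\<lambda>z. f (fst z) * g (snd z)) = integral\<^sup>L M1 f * integral\<^sup>L M2 g"
proof -
  interpret pair_sigma_finite M1 M2 using M1 M2 by (simp add: pair_sigma_finite_def)
  have [measurable]: "f \<in> borel_measurable M1" "g \<in> borel_measurable M2" using f g by auto
  show I: "integrable (M1 \<Otimes>\<^sub>M M2) (\<lambda>z. f (fst z) * g (snd z))"
  proof (rule Fubini_integrable)
    show "(\<lambda>z. f (fst z) * g (snd z)) \<in> borel_measurable (M1 \<Otimes>\<^sub>M M2)" by measurable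
    have "integrable M1 (\<lambda>x. \<bar>f x\<bar> * (\<integral>y. \<bar>g y\<bar> \<partial>M2))" using f by auto
    then show "integrable M1 (\<lambda>x. \<integral>y. norm (f (fst (x, y)) * g (snd (x, y))) \<partial>M2)"
      by (simp add: abs_mult)
    show "AE x in M1. integrable M2 (\<lambda>y. f (fst (x, y)) * g (snd (x, y)))"
      using g by auto
  qed
  have "integral\<^sup>L (M1 \<Otimes>\<^sub>M M2) (\<lambda>z. f (fst z) * g (snd z)) = (\<integral>x. (\<integral>y. f x * g y \<partial>M2) \<partial>M1)"
    using integral_fst'[OF I] by simp
  also have "\<dots> = (\<integral>x. f x * integral\<^sup>L M2 g \<partial>M1)" by simp
  also have "\<dots> = integral\<^sup>L M1 f * integral\<^sup>L M2 g" by simp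
  finally show "integral\<^sup>L (M1 \<Otimes>\<^sub>M M2) (\<lambda>z. f (fst z) * g (snd z)) = integral\<^sup>L M1 f * integral\<^sup>L M2 g" .
qed

abbreviation PP :: "nat \<Rightarrow> ((nat \<Rightarrow> real) \<times> (nat \<Rightarrow> real)) measure" where
  "PP L \<equiv> gauss L \<Otimes>\<^sub>M gauss L"

lemma gauss_sf: "sigma_finite_measure (gauss L)"
  using gauss_prob prob_space_imp_sigma_finite by blast

lemma PP_prob: "prob_space (PP L)"
  by (intro prob_space_pair gauss_prob)

lemma PP_prod:
  fixes f g :: "_ \<Rightarrow> real"
  assumes "integrable (gauss L) f" "integrable (gauss L) g"
  shows "integrable (PP L) (\<lambda>z. f (fst z) * g (snd z))"
    "integral\<^sup>L (PP L) (\<lambda>z. f (fst z) * g (snd z)) = integral\<^sup>L (gauss L) f * integral\<^sup>L (gauss L) g"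
  using pair_prod[OF gauss_sf gauss_sf assms] by auto

lemma PP_fst:
  fixes f :: "_ \<Rightarrow> real"
  assumes "integrable (gauss L) f"
  shows "has_bochner_integral (PP L) (\<lambda>z. f (fst z)) (integral\<^sup>L (gauss L) f)"
proof -
  interpret prob_space "gauss L" by (rule gauss_prob)
  have "integrable (gauss L) (\<lambda>_. 1::real)" by simp
  from PP_prod[OF assms this] show ?thesis
    by (simp add: has_bochner_integral_iff prob_space)
qed

lemma PP_snd:
  fixes f :: "_ \<Rightarrow> real"
  assumes "integrable (gauss L) f"
  shows "has_bochner_integral (PP L) (\<lambda>z. f (snd z)) (integral\<^sup>L (gauss L) f)"
proof -
  interpret prob_space "gauss L" by (rule gauss_prob)
  have "integrable (gauss L) (\<lambda>_. 1::real)" by simp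
  from PP_prod[OF this assms] show ?thesis
    by (simp add: has_bochner_integral_iff prob_space)
qed




lemma gx1: "l \<in> {1..L} \<Longrightarrow> integrable (gauss L) (\<lambda>x. x l)"
  by (rule gauss_coord_integrable[of l L "\<lambda>x. x", OF _ _ SN_int1]) auto
lemma gx2: "l \<in> {1..L} \<Longrightarrow> integrable (gauss L) (\<lambda>x. (x l)^2)"
  by (rule gauss_coord_integrable[of l L "\<lambda>x. x^2", OF _ _ SN_int2]) auto
lemma gx1i: "l \<in> {1..L} \<Longrightarrow> integral\<^sup>L (gauss L) (\<lambda>x. x l) = 0"
  using gauss_coord_integral[of l L "\<lambda>x. x"] SN_mean by simp
lemma gx2i: "l \<in> {1..L} \<Longrightarrow> integral\<^sup>L (gauss L) (\<lambda>x. (x l)^2) = 1"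
  using gauss_coord_integral[of l L "\<lambda>x. x^2"] SN_var by simp




lemma PX: "l \<in> {1..L} \<Longrightarrow> has_bochner_integral (PP L) (\<lambda>z. fst z l) 0"
  using PP_fst[OF gx1[of l L]] gx1i[of l L] by simp
lemma PY: "l \<in> {1..L} \<Longrightarrow> has_bochner_integral (PP L) (\<lambda>z. snd z l) 0"
  using PP_snd[OF gx1[of l L]] gx1i[of l L] by simp
lemma PX2: "l \<in> {1..L} \<Longrightarrow> has_bochner_integral (PP L) (\<lambda>z. (fst z l)^2) 1"
  using PP_fst[OF gx2[of l L]] gx2i[of l L] by simp
lemma PY2: "l \<in> {1..L} \<Longrightarrow> has_bochner_integral (PP L) (\<lambda>z. (snd z l)^2) 1"
  using PP_snd[OF gx2[of l L]] gx2i[of l L] by simp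
lemma PXY: "l \<in> {1..L} \<Longrightarrow> has_bochner_integral (PP L) (\<lambda>z. fst z l * snd z l) 0"
  using PP_prod[OF gx1[of l L] gx1[of l L]] gx1i[of l L] by (simp add: has_bochner_integral_iff)




lemma PC: "has_bochner_integral (PP L) (\<lambda>_. c::real) c"
proof -
  interpret prob_space "PP L" by (rule PP_prob)
  show ?thesis by (simp add: has_bochner_integral_iff prob_space)
qed

lemma PS2: "l \<in> {1..L} \<Longrightarrow>
  has_bochner_integral (PP L) (\<lambda>z. (1 + mk * fst z l + Rk * snd z l)^2) (1 + mk^2 + Rk^2)"
proof -
  assume l: "l \<in> {1..L}"
  interpret prob_space "PP L" by (rule PP_prob)
  have "has_bochner_integral (PP L) (\<lambda>z. 1 + 2 * mk * fst z l + 2 * Rk * snd z l + mk^2 * (fst z l)^2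
     + Rk^2 * (snd z l)^2 + (2*mk*Rk) * (fst z l * snd z l)) (1 + 2*mk*0 + 2*Rk*0 + mk^2*1 + Rk^2*1 + (2*mk*Rk)*0)"
    by (intro has_bochner_integral_add has_bochner_integral_mult_right PX PY PX2 PY2 PXY l PC)
  then show ?thesis by (simp add: power2_eq_square algebra_simps)
qed

lemma PS1: "l \<in> {1..L} \<Longrightarrow>
  has_bochner_integral (PP L) (\<lambda>z. 1 + mk * fst z l + Rk * snd z l) 1"
proof -
  assume l: "l \<in> {1..L}"
  interpret prob_space "PP L" by (rule PP_prob)
  have "has_bochner_integral (PP L) (\<lambda>z. 1 + mk * fst z l + Rk * snd z l) (1 + mk * 0 + Rk * 0)"
    by (intro has_bochner_integral_add has_bochner_integral_mult_right PX PY l PC)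
  then show ?thesis by simp
qed




lemma lin_one_inner:
  assumes e: "\<epsilon> \<in> {1..L}"
  shows "(\<integral>z. (let s = sigma_lin L (\<lambda>l. mk * fst z l + Rk * snd z l) in
              g_one L \<epsilon> (fst z) * (1 - 2 * mv * s \<epsilon> + (mv\<^sup>2 + Rv\<^sup>2) * (\<Sum>l\<in>{1..L}. (s l)\<^sup>2)))
          \<partial>(gauss L \<Otimes>\<^sub>M gauss L)) = 1 - 2 * mv + (mv\<^sup>2 + Rv\<^sup>2) * (real L * (1 + mk\<^sup>2 + Rk\<^sup>2))"
proof -
  have "has_bochner_integral (PP L) (\<lambda>z. 1 - 2 * mv * (1 + mk * fst z \<epsilon> + Rk * snd z \<epsilon>)
     + (mv\<^sup>2 + Rv\<^sup>2) * (\<Sum>l\<in>{1..L}. (1 + mk * fst z l + Rk * snd z l)\<^sup>2))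
     (1 - 2 * mv * 1 + (mv\<^sup>2 + Rv\<^sup>2) * (\<Sum>l\<in>{1..L}. (1 + mk\<^sup>2 + Rk\<^sup>2)))"
    by (intro has_bochner_integral_add has_bochner_integral_diff has_bochner_integral_mult_right
        has_bochner_integral_sum PS1 PS2 PC e) auto
  then have "(\<integral>z. 1 - 2 * mv * (1 + mk * fst z \<epsilon> + Rk * snd z \<epsilon>)
     + (mv\<^sup>2 + Rv\<^sup>2) * (\<Sum>l\<in>{1..L}. (1 + mk * fst z l + Rk * snd z l)\<^sup>2) \<partial>PP L)
     = 1 - 2 * mv + (mv\<^sup>2 + Rv\<^sup>2) * (real L * (1 + mk\<^sup>2 + Rk\<^sup>2))"
    by (simp add: has_bochner_integral_iff)
  moreover have "(\<integral>z. (let s = sigma_lin L (\<lambda>l. mk * fst z l + Rk * snd z l) in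
              g_one L \<epsilon> (fst z) * (1 - 2 * mv * s \<epsilon> + (mv\<^sup>2 + Rv\<^sup>2) * (\<Sum>l\<in>{1..L}. (s l)\<^sup>2))) \<partial>PP L)
    = (\<integral>z. 1 - 2 * mv * (1 + mk * fst z \<epsilon> + Rk * snd z \<epsilon>)
     + (mv\<^sup>2 + Rv\<^sup>2) * (\<Sum>l\<in>{1..L}. (1 + mk * fst z l + Rk * snd z l)\<^sup>2) \<partial>PP L)"
    by (rule Bochner_Integration.integral_cong[OF refl]) (simp add: sigma_lin_def g_one_def Let_def add.assoc)
  ultimately show ?thesis by simp
qed

lemma avg_const: "L \<ge> 1 \<Longrightarrow> (\<And>\<epsilon>. \<epsilon> \<in> {1..L} \<Longrightarrow> h \<epsilon> = (c::real)) \<Longrightarrow> 1 / real L * (\<Sum>\<epsilon>\<in>{1..L}. h \<epsilon>) = c"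
  by (simp add: sum.cong[of _ _ h "\<lambda>_. c"])

lemma Etil_lin_one:
  "Etil p Lbar sigma_lin g_one mk mv Rk Rv =
   EL p Lbar (\<lambda>L. 1 - 2 * mv + (mv\<^sup>2 + Rv\<^sup>2) * (real L * (1 + mk\<^sup>2 + Rk\<^sup>2)))"
  unfolding Etil_def EL_def
  by (intro sum.cong refl arg_cong2[where f="(*)"] avg_const lin_one_inner) auto




lemma PP_meas_fst[measurable]: "l \<in> {1..L} \<Longrightarrow> (\<lambda>z. fst z l) \<in> borel_measurable (PP L)"
  using measurable_compose[OF measurable_fst gauss_comp_meas] by blast
lemma PP_meas_snd[measurable]: "l \<in> {1..L} \<Longrightarrow> (\<lambda>z. snd z l) \<in> borel_measurable (PP L)"
  using measurable_compose[OF measurable_snd gauss_comp_meas] by blast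

lemma sq_sum_ge: assumes "L \<ge> 1" "(\<Sum>l\<in>{1..L}. s l) = (1::real)"
  shows "(\<Sum>l\<in>{1..L}. (s l)\<^sup>2) \<ge> 1 / real L"
proof -
  have "0 \<le> (\<Sum>l\<in>{1..L}. (s l - 1 / real L)\<^sup>2)" by (intro sum_nonneg) auto
  also have "\<dots> = (\<Sum>l\<in>{1..L}. (s l)\<^sup>2) - 2 / real L * (\<Sum>l\<in>{1..L}. s l) + real L * (1 / real L)^2"
  proof -
    have "\<And>l. (s l - 1 / real L)\<^sup>2 = (s l)\<^sup>2 - 2 / real L * s l + (1 / real L)^2"
      by (simp add: power2_diff)
    then show ?thesis by (simp add: sum.distrib sum_subtractf sum_distrib_left)
  qed
  also have "\<dots> = (\<Sum>l\<in>{1..L}. (s l)\<^sup>2) - 1 / real L"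
    using assms by (simp add: power2_eq_square field_simps)
  finally show ?thesis by simp
qed

lemma softmax_sum: "L \<ge> 1 \<Longrightarrow> (\<Sum>l\<in>{1..L}. sigma_softmax L x l) = 1"
proof -
  assume L: "L \<ge> 1"
  have pos: "(\<Sum>l'\<in>{1..L}. exp (x l')) > 0" using L by (intro sum_pos) auto
  show ?thesis unfolding sigma_softmax_def using pos by (simp add: sum_divide_distrib[symmetric])
qed

lemma softmax_bounds: "L \<ge> 1 \<Longrightarrow> l \<in> {1..L} \<Longrightarrow> 0 \<le> sigma_softmax L x l \<and> sigma_softmax L x l \<le> 1"
proof -
  assume L: "L \<ge> 1" and l: "l \<in> {1..L}"
  have "exp (x l) \<le> (\<Sum>l'\<in>{1..L}. exp (x l'))"
    using l by (intro member_le_sum) auto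
  moreover have "(\<Sum>l'\<in>{1..L}. exp (x l')) > 0" using L by (intro sum_pos) auto
  ultimately show ?thesis unfolding sigma_softmax_def by (simp add: divide_le_eq_1)
qed

definition Gsm :: "nat \<Rightarrow> real \<Rightarrow> real \<Rightarrow> real \<Rightarrow> real \<Rightarrow> nat \<Rightarrow> _ \<Rightarrow> real" where
  "Gsm L mk mv Rk Rv \<epsilon> z = (let s = sigma_softmax L (\<lambda>l. mk * fst z l + Rk * snd z l) in
              g_one L \<epsilon> (fst z) * (1 - 2 * mv * s \<epsilon> + (mv\<^sup>2 + Rv\<^sup>2) * (\<Sum>l\<in>{1..L}. (s l)\<^sup>2)))"

lemma Gsm_meas: "\<epsilon> \<in> {1..L} \<Longrightarrow> Gsm L mk mv Rk Rv \<epsilon> \<in> borel_measurable (PP L)"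
  unfolding Gsm_def sigma_softmax_def g_one_def Let_def by measurable

lemma Gsm_int: assumes "L \<ge> 1" "\<epsilon> \<in> {1..L}" shows "integrable (PP L) (Gsm L mk mv Rk Rv \<epsilon>)"
proof -
  interpret prob_space "PP L" by (rule PP_prob)
  show ?thesis
  proof (rule integrable_const_bound[where B="1 + 2 * \<bar>mv\<bar> + (mv\<^sup>2 + Rv\<^sup>2) * real L"])
    show "Gsm L mk mv Rk Rv \<epsilon> \<in> borel_measurable (PP L)" using assms(2) by (rule Gsm_meas)
    show "AE x in PP L. norm (Gsm L mk mv Rk Rv \<epsilon> x) \<le> 1 + 2 * \<bar>mv\<bar> + (mv\<^sup>2 + Rv\<^sup>2) * real L"
    proof (rule AE_I2)
      fix z
      define s where "s = sigma_softmax L (\<lambda>l. mk * fst z l + Rk * snd z l)"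
      have sb: "\<And>l. l \<in> {1..L} \<Longrightarrow> 0 \<le> s l \<and> s l \<le> 1" unfolding s_def using assms softmax_bounds by blast
      have Q: "0 \<le> (\<Sum>l\<in>{1..L}. (s l)\<^sup>2) \<and> (\<Sum>l\<in>{1..L}. (s l)\<^sup>2) \<le> real L"
      proof
        show "0 \<le> (\<Sum>l\<in>{1..L}. (s l)\<^sup>2)" by (intro sum_nonneg) auto
        have "(\<Sum>l\<in>{1..L}. (s l)\<^sup>2) \<le> (\<Sum>l\<in>{1..L}. 1)"
          using sb by (intro sum_mono) (simp add: power_le_one)
        then show "(\<Sum>l\<in>{1..L}. (s l)\<^sup>2) \<le> real L" by simp
      qed
      have se: "0 \<le> s \<epsilon> \<and> s \<epsilon> \<le> 1" using sb assms by blast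
      have c: "0 \<le> mv\<^sup>2 + Rv\<^sup>2" by simp
      have "\<bar>1 - 2 * mv * s \<epsilon> + (mv\<^sup>2 + Rv\<^sup>2) * (\<Sum>l\<in>{1..L}. (s l)\<^sup>2)\<bar>
         \<le> 1 + \<bar>2 * mv * s \<epsilon>\<bar> + (mv\<^sup>2 + Rv\<^sup>2) * (\<Sum>l\<in>{1..L}. (s l)\<^sup>2)"
        using Q c by (smt (verit) mult_nonneg_nonneg)
      also have "\<dots> \<le> 1 + 2 * \<bar>mv\<bar> + (mv\<^sup>2 + Rv\<^sup>2) * real L"
      proof -
        have "\<bar>2 * mv * s \<epsilon>\<bar> \<le> 2 * \<bar>mv\<bar>" using se by (simp add: abs_mult mult_left_le)
        moreover have "(mv\<^sup>2 + Rv\<^sup>2) * (\<Sum>l\<in>{1..L}. (s l)\<^sup>2) \<le> (mv\<^sup>2 + Rv\<^sup>2) * real L"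
          using Q c by (intro mult_left_mono) auto
        ultimately show ?thesis by linarith
      qed
      finally show "norm (Gsm L mk mv Rk Rv \<epsilon> z) \<le> 1 + 2 * \<bar>mv\<bar> + (mv\<^sup>2 + Rv\<^sup>2) * real L"
        unfolding Gsm_def s_def g_one_def Let_def by simp
    qed
  qed
qed




lemma Etil_sm: "Etil p Lbar sigma_softmax g_one mk mv Rk Rv =
  EL p Lbar (\<lambda>L. 1 / real L * (\<Sum>\<epsilon>\<in>{1..L}. integral\<^sup>L (PP L) (Gsm L mk mv Rk Rv \<epsilon>)))"
  unfolding Etil_def Gsm_def by simp

lemma sm_pointwise:
  assumes L: "L \<ge> 1"
  shows "1 / real L * (\<Sum>\<epsilon>\<in>{1..L}. Gsm L mk mv Rk Rv \<epsilon> z) \<ge> 1 - 1 / real L"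
proof -
  define s where "s = sigma_softmax L (\<lambda>l. mk * fst z l + Rk * snd z l)"
  define Q where "Q = (\<Sum>l\<in>{1..L}. (s l)\<^sup>2)"
  have s1: "(\<Sum>l\<in>{1..L}. s l) = 1" unfolding s_def using L by (rule softmax_sum)
  have Q: "Q \<ge> 1 / real L" unfolding Q_def using L s1 by (rule sq_sum_ge)
  have "(\<Sum>\<epsilon>\<in>{1..L}. Gsm L mk mv Rk Rv \<epsilon> z) = (\<Sum>\<epsilon>\<in>{1..L}. 1 - 2 * mv * s \<epsilon> + (mv\<^sup>2 + Rv\<^sup>2) * Q)"
    unfolding Gsm_def g_one_def Let_def s_def[symmetric] Q_def[symmetric] by simp
  also have "\<dots> = real L - 2 * mv + real L * ((mv\<^sup>2 + Rv\<^sup>2) * Q)"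
    using s1 by (simp add: sum.distrib sum_subtractf sum_distrib_left[symmetric])
  finally have eq: "1 / real L * (\<Sum>\<epsilon>\<in>{1..L}. Gsm L mk mv Rk Rv \<epsilon> z) = 1 + (mv\<^sup>2 + Rv\<^sup>2) * Q - 2 * mv / real L"
    using L by (simp add: field_simps)
  have "(mv\<^sup>2 + Rv\<^sup>2) * Q \<ge> mv\<^sup>2 * (1 / real L)"
    using Q by (intro mult_mono) auto
  moreover have "mv\<^sup>2 * (1 / real L) - 2 * mv / real L \<ge> - 1 / real L"
  proof -
    have "(mv - 1)\<^sup>2 / real L \<ge> 0" by simp
    moreover have "(mv - 1)\<^sup>2 / real L = mv\<^sup>2 * (1 / real L) - 2 * mv / real L + 1 / real L"
      using L by (simp add: power2_diff field_simps)
    moreover have "- 1 / real L = - (1 / real L)" by simp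
    ultimately show ?thesis by linarith
  qed
  ultimately show ?thesis unfolding eq by linarith
qed

lemma sm_lower:
  assumes L: "L \<ge> 1"
  shows "1 / real L * (\<Sum>\<epsilon>\<in>{1..L}. integral\<^sup>L (PP L) (Gsm L mk mv Rk Rv \<epsilon>)) \<ge> 1 - 1 / real L"
proof -
  interpret prob_space "PP L" by (rule PP_prob)
  have "1 / real L * (\<Sum>\<epsilon>\<in>{1..L}. integral\<^sup>L (PP L) (Gsm L mk mv Rk Rv \<epsilon>))
      = (\<integral>z. 1 / real L * (\<Sum>\<epsilon>\<in>{1..L}. Gsm L mk mv Rk Rv \<epsilon> z) \<partial>PP L)"
    using Gsm_int[OF L] by (simp add: integral_sum)
  also have "\<dots> \<ge> 1 - 1 / real L"
  proof (rule integral_ge_const)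
    show "integrable (PP L) (\<lambda>z. 1 / real L * (\<Sum>\<epsilon>\<in>{1..L}. Gsm L mk mv Rk Rv \<epsilon> z))"
      by (intro integrable_mult_right Bochner_Integration.integrable_sum Gsm_int[OF L]) auto
    show "AE z in PP L. 1 - 1 / real L \<le> 1 / real L * (\<Sum>\<epsilon>\<in>{1..L}. Gsm L mk mv Rk Rv \<epsilon> z)"
      using sm_pointwise[OF L] by simp
  qed
  finally show ?thesis .
qed

lemma sm_val:
  assumes L: "L \<ge> 1"
  shows "1 / real L * (\<Sum>\<epsilon>\<in>{1..L}. integral\<^sup>L (PP L) (Gsm L 0 1 0 0 \<epsilon>)) = 1 - 1 / real L"
proof -
  interpret prob_space "PP L" by (rule PP_prob)
  have "\<And>\<epsilon> z. Gsm L 0 1 0 0 \<epsilon> z = 1 - 1 / real L"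
    using L by (simp add: Gsm_def g_one_def sigma_softmax_def power2_eq_square field_simps)
  then have "\<And>\<epsilon>. Gsm L 0 1 0 0 \<epsilon> = (\<lambda>_. 1 - 1 / real L)" by (intro ext) auto
  then show ?thesis using L by (simp add: prob_space)
qed




definition Amax :: "nat \<Rightarrow> (nat \<Rightarrow> real) \<Rightarrow> real" where
  "Amax n x = Max (x ` {1..n})"

definition phi :: "real \<Rightarrow> real" where
  "phi a = (\<integral>y. max (y - a) 0 \<partial>SN)"

lemma gauss_abs_int: "l \<in> {1..m} \<Longrightarrow> integrable (gauss m) (\<lambda>x. \<bar>x l\<bar>)"
  by (rule gauss_coord_integrable[of l m "\<lambda>x. \<bar>x\<bar>", OF _ _ SN_intabs]) auto

lemma Amax_meas: "n \<le> m \<Longrightarrow> Amax n \<in> borel_measurable (gauss m)"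
  unfolding Amax_def
  by (rule borel_measurable_Max) (auto intro: gauss_comp_meas)

lemma Amax_bound: "n \<ge> 1 \<Longrightarrow> \<bar>Amax n x\<bar> \<le> (\<Sum>l\<in>{1..n}. \<bar>x l\<bar>)"
proof -
  assume n: "n \<ge> 1"
  have "Amax n x \<in> x ` {1..n}" unfolding Amax_def using n by (intro Max_in) auto
  then obtain l where l: "l \<in> {1..n}" "Amax n x = x l" by auto
  have "\<bar>x l\<bar> \<le> (\<Sum>l\<in>{1..n}. \<bar>x l\<bar>)" using l(1) by (intro member_le_sum) auto
  then show ?thesis using l by simp
qed

lemma sum_abs_int: "n \<le> m \<Longrightarrow> integrable (gauss m) (\<lambda>x. \<Sum>l\<in>{1..n}. \<bar>x l\<bar>)"
  by (intro Bochner_Integration.integrable_sum gauss_abs_int) auto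

lemma Amax_int: "1 \<le> n \<Longrightarrow> n \<le> m \<Longrightarrow> integrable (gauss m) (Amax n)"
  by (rule Bochner_Integration.integrable_bound[OF sum_abs_int Amax_meas])
     (auto intro!: AE_I2 order.trans[OF Amax_bound] simp: sum_nonneg)

lemma pos_int: "integrable SN (\<lambda>y. max (y - a) 0)"
proof -
  interpret prob_space SN by (rule SN_prob)
  show ?thesis
  by (rule Bochner_Integration.integrable_bound[where f="\<lambda>y. \<bar>y\<bar> + \<bar>a\<bar>"])
     (auto intro!: Bochner_Integration.integrable_add SN_intabs)
qed

lemma phi_nonneg: "phi a \<ge> 0"
  unfolding phi_def by (rule integral_nonneg_AE) auto

lemma phi_anti: "a \<le> b \<Longrightarrow> phi b \<le> phi a"
  unfolding phi_def by (intro integral_mono pos_int) auto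

lemma phi_bound: "phi a \<le> (\<integral>y. \<bar>y\<bar> \<partial>SN) + \<bar>a\<bar>"
proof -
  interpret prob_space SN by (rule SN_prob)
  have "phi a \<le> (\<integral>y. \<bar>y\<bar> + \<bar>a\<bar> \<partial>SN)"
    unfolding phi_def by (intro integral_mono pos_int Bochner_Integration.integrable_add SN_intabs) auto
  also have "\<dots> = (\<integral>y. \<bar>y\<bar> \<partial>SN) + \<bar>a\<bar>"
    using SN_intabs prob_space by simp
  finally show ?thesis .
qed

lemma phi_meas[measurable]: "phi \<in> borel_measurable borel"
proof -
  have "mono (\<lambda>t. phi (- t))" by (auto simp: mono_def intro!: phi_anti)
  then have "(\<lambda>t. phi (- t)) \<in> borel_measurable borel" by (rule borel_measurable_mono)
  then have "(\<lambda>t. phi (- (- t))) \<in> borel_measurable borel" by measurable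
  then show ?thesis by simp
qed

lemma phiA_int: "1 \<le> n \<Longrightarrow> n \<le> m \<Longrightarrow> integrable (gauss m) (\<lambda>x. phi (Amax n x))"
proof -
  assume n: "1 \<le> n" "n \<le> m"
  interpret prob_space "gauss m" by (rule gauss_prob)
  show ?thesis
  proof (rule Bochner_Integration.integrable_bound[where f="\<lambda>x. (\<integral>y. \<bar>y\<bar> \<partial>SN) + (\<Sum>l\<in>{1..n}. \<bar>x l\<bar>)"])
    show "integrable (gauss m) (\<lambda>x. (\<integral>y. \<bar>y\<bar> \<partial>SN) + (\<Sum>l\<in>{1..n}. \<bar>x l\<bar>))"
      using n by (intro Bochner_Integration.integrable_add sum_abs_int integrable_const) auto
    show "(\<lambda>x. phi (Amax n x)) \<in> borel_measurable (gauss m)"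
      using Amax_meas[OF n(2)] by measurable
    show "AE x in gauss m. norm (phi (Amax n x)) \<le> norm ((\<integral>y. \<bar>y\<bar> \<partial>SN) + (\<Sum>l\<in>{1..n}. \<bar>x l\<bar>))"
    proof (rule AE_I2)
      fix x
      have "0 \<le> (\<integral>y. \<bar>y\<bar> \<partial>SN)" by (rule integral_nonneg_AE) auto
      then show "norm (phi (Amax n x)) \<le> norm ((\<integral>y. \<bar>y\<bar> \<partial>SN) + (\<Sum>l\<in>{1..n}. \<bar>x l\<bar>))"
        using phi_nonneg[of "Amax n x"] phi_bound[of "Amax n x"] Amax_bound[OF n(1), of x]
        by (simp add: sum_nonneg)
    qed
  qed
qed




lemma gauss_Suc: "gauss (Suc n) = PiM (insert (Suc n) {1..n}) (\<lambda>_. SN)"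
  unfolding gauss_def by (simp add: atLeastAtMostSuc_conv)

lemma GI:
  fixes f :: "_ \<Rightarrow> real"
  assumes "integrable (gauss (Suc n)) f"
  shows "integral\<^sup>L (gauss (Suc n)) f = (\<integral>x. (\<integral>y. f (x(Suc n := y)) \<partial>SN) \<partial>gauss n)"
  using SNP.product_integral_insert[of "{1..n}" "Suc n" f] assms unfolding gauss_Suc
  by (simp add: gauss_def)

lemma A_upd: "Amax n (x(Suc n := y)) = Amax n x"
proof -
  have "(x(Suc n := y)) ` {1..n} = x ` {1..n}" by (intro image_cong) auto
  then show ?thesis unfolding Amax_def by simp
qed

lemma A_Suc: "n \<ge> 1 \<Longrightarrow> Amax (Suc n) x = max (x (Suc n)) (Amax n x)"
  unfolding Amax_def using atLeastAtMostSuc_conv[of 1 n]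
  by (simp add: Max_insert)

lemma fmax_eq: "fmax L = integral\<^sup>L (gauss L) (Amax L)"
  unfolding fmax_def Amax_def[abs_def] by simp

definition Dm :: "nat \<Rightarrow> real" where
  "Dm n = (\<integral>x. phi (Amax n x) \<partial>gauss n)"

lemma max_int: "(\<integral>y. max y a \<partial>SN) = a + phi a"
proof -
  interpret prob_space SN by (rule SN_prob)
  have "(\<integral>y. max y a \<partial>SN) = (\<integral>y. a + max (y - a) 0 \<partial>SN)"
    by (rule Bochner_Integration.integral_cong) auto
  also have "\<dots> = a + phi a" unfolding phi_def using pos_int[of a] prob_space by simp
  finally show ?thesis .
qed

lemma fmax_Suc: assumes n: "n \<ge> 1" shows "fmax (Suc n) = fmax n + Dm n"
proof -
  have "fmax (Suc n) = (\<integral>x. (\<integral>y. Amax (Suc n) (x(Suc n := y)) \<partial>SN) \<partial>gauss n)"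
    unfolding fmax_eq using n by (intro GI Amax_int) auto
  also have "\<dots> = (\<integral>x. Amax n x + phi (Amax n x) \<partial>gauss n)"
    using n by (intro Bochner_Integration.integral_cong refl) (simp add: A_Suc A_upd max_int)
  also have "\<dots> = fmax n + Dm n"
    unfolding fmax_eq Dm_def using n by (simp add: Amax_int phiA_int)
  finally show ?thesis .
qed

lemma Dm_nonneg: "Dm n \<ge> 0"
  unfolding Dm_def by (rule integral_nonneg_AE) (auto simp: phi_nonneg)

lemma Dm_anti: assumes n: "n \<ge> 1" shows "Dm (Suc n) \<le> Dm n"
proof -
  interpret prob_space SN by (rule SN_prob)
  have "Dm (Suc n) \<le> (\<integral>x. phi (Amax n x) \<partial>gauss (Suc n))"
    unfolding Dm_def using n
    by (intro integral_mono phiA_int phi_anti) (auto simp: A_Suc)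
  also have "\<dots> = (\<integral>x. (\<integral>y. phi (Amax n (x(Suc n := y))) \<partial>SN) \<partial>gauss n)"
    using n by (intro GI phiA_int) auto
  also have "\<dots> = Dm n"
    unfolding Dm_def A_upd using prob_space by simp
  finally show ?thesis .
qed

lemma fmax_1: "fmax 1 = 0"
proof -
  have "fmax 1 = (\<integral>x. x 1 \<partial>gauss 1)" unfolding fmax_def by simp
  then show ?thesis using gx1i[of 1 1] by simp
qed




lemma tie_null:
  assumes i: "i \<in> {1..L}" and j: "j \<in> {1..L}" and ij: "i \<noteq> j"
  shows "{x \<in> space (gauss L). x i = x j} \<in> null_sets (gauss L)"
proof -
  define I where "I = {1..L} - {j}"
  have IJ: "{1..L} = insert j I" "finite I" "j \<notin> I" using j unfolding I_def by auto
  have g: "gauss L = PiM (insert j I) (\<lambda>_. SN)" unfolding gauss_def IJ(1) ..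
  define A where "A = {x \<in> space (gauss L). x i = x j}"
  have A[measurable]: "A \<in> sets (gauss L)" unfolding A_def using i j by measurable
  have "emeasure (gauss L) A = (\<integral>\<^sup>+x. indicator A x \<partial>gauss L)" by simp
  also have "\<dots> = (\<integral>\<^sup>+x. (\<integral>\<^sup>+y. indicator A (x(j := y)) \<partial>SN) \<partial>PiM I (\<lambda>_. SN))"
    unfolding g by (rule SNP.product_nn_integral_insert[OF IJ(2,3)]) (use A g in simp)
  also have "\<dots> = (\<integral>\<^sup>+x. 0 \<partial>PiM I (\<lambda>_. SN))"
  proof (rule nn_integral_cong)
    fix x assume x: "x \<in> space (PiM I (\<lambda>_. SN))"
    have iI: "i \<in> I" using i ij unfolding I_def by auto
    have "\<And>y. indicator A (x(j := y)) = (indicator {x i} y :: ennreal)"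
    proof -
      fix y
      have "x(j := y) \<in> space (gauss L)" using x unfolding g by (auto simp: space_PiM PiE_def extensional_def)
      then show "indicator A (x(j := y)) = (indicator {x i} y :: ennreal)"
        unfolding A_def using ij by (auto split: split_indicator)
    qed
    then show "(\<integral>\<^sup>+y. indicator A (x(j := y)) \<partial>SN) = 0"
      using SN_singleton[of "x i"] by simp
  qed
  finally show ?thesis using A unfolding A_def by (simp add: null_sets_def)
qed

lemma no_ties: "AE x in gauss L. \<forall>i\<in>{1..L}. \<forall>j\<in>{1..L}. i \<noteq> j \<longrightarrow> x i \<noteq> x j"
proof -
  have "\<forall>i\<in>{1..L}. AE x in gauss L. \<forall>j\<in>{1..L}. i \<noteq> j \<longrightarrow> x i \<noteq> x j"
  proof
    fix i assume i: "i \<in> {1..L}"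
    show "AE x in gauss L. \<forall>j\<in>{1..L}. i \<noteq> j \<longrightarrow> x i \<noteq> x j"
    proof (subst AE_finite_all)
      show "finite {1..L}" by simp
      show "\<forall>j\<in>{1..L}. AE x in gauss L. i \<noteq> j \<longrightarrow> x i \<noteq> x j"
      proof
        fix j assume j: "j \<in> {1..L}"
        show "AE x in gauss L. i \<noteq> j \<longrightarrow> x i \<noteq> x j"
        proof (cases "i = j")
          case False
          show ?thesis
            by (rule AE_I'[OF tie_null[OF i j False]]) (use False in auto)
        qed simp
      qed
    qed
  qed
  then show ?thesis by (subst AE_finite_all) auto
qed




lemma AE_PP_fst: assumes "AE x in gauss L. P x" shows "AE z in PP L. P (fst z)"
proof -
  interpret prob_space "gauss L" by (rule gauss_prob)
  have "AE x in distr (PP L) (gauss L) fst. P x" unfolding distr_pair_fst[of "gauss L"] by (rule assms)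
  then show ?thesis by (rule AE_distrD[OF measurable_fst])
qed

definition Ind :: "nat \<Rightarrow> nat \<Rightarrow> (nat \<Rightarrow> real) \<Rightarrow> real" where
  "Ind L \<epsilon> x = (if x \<epsilon> = Amax L x then 1 else 0)"

lemma Ind_meas[measurable]: "\<epsilon> \<in> {1..L} \<Longrightarrow> Ind L \<epsilon> \<in> borel_measurable (gauss L)"
  unfolding Ind_def using Amax_meas[of L L] by measurable

lemma Ind_int: "\<epsilon> \<in> {1..L} \<Longrightarrow> integrable (gauss L) (Ind L \<epsilon>)"
proof -
  assume e: "\<epsilon> \<in> {1..L}"
  interpret prob_space "gauss L" by (rule gauss_prob)
  show ?thesis
    by (rule integrable_const_bound[where B=1]) (use e in \<open>auto simp: Ind_def\<close>)
qed

definition Bf :: "nat \<Rightarrow> real \<Rightarrow> real \<Rightarrow> real \<Rightarrow> real \<Rightarrow> nat \<Rightarrow> _ \<Rightarrow> real" where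
  "Bf L mk mv Rk Rv \<epsilon> z = 1 - 2 * mv * (1 + mk * fst z \<epsilon> + Rk * snd z \<epsilon>)
     + (mv\<^sup>2 + Rv\<^sup>2) * (\<Sum>l\<in>{1..L}. (1 + mk * fst z l + Rk * snd z l)\<^sup>2)"

definition Qf :: "nat \<Rightarrow> real \<Rightarrow> real \<Rightarrow> _ \<Rightarrow> real" where
  "Qf L mk Rk z = (\<Sum>l\<in>{1..L}. (1 + mk * fst z l + Rk * snd z l)\<^sup>2)"

lemma Qf_hb: "has_bochner_integral (PP L) (Qf L mk Rk) (real L * (1 + mk\<^sup>2 + Rk\<^sup>2))"
proof -
  have "has_bochner_integral (PP L) (\<lambda>z. \<Sum>l\<in>{1..L}. (1 + mk * fst z l + Rk * snd z l)\<^sup>2)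
     (\<Sum>l\<in>{1..L}. (1 + mk\<^sup>2 + Rk\<^sup>2))"
    by (intro has_bochner_integral_sum PS2) auto
  then show ?thesis unfolding Qf_def[abs_def] by simp
qed

lemma Bf_int: "\<epsilon> \<in> {1..L} \<Longrightarrow> integrable (PP L) (Bf L mk mv Rk Rv \<epsilon>)"
proof -
  assume e: "\<epsilon> \<in> {1..L}"
  have "has_bochner_integral (PP L) (\<lambda>z. 1 - 2 * mv * (1 + mk * fst z \<epsilon> + Rk * snd z \<epsilon>)
     + (mv\<^sup>2 + Rv\<^sup>2) * Qf L mk Rk z) (1 - 2 * mv * 1 + (mv\<^sup>2 + Rv\<^sup>2) * (real L * (1 + mk\<^sup>2 + Rk\<^sup>2)))"
    by (intro has_bochner_integral_add has_bochner_integral_diff has_bochner_integral_mult_right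
        Qf_hb PS1 PC e)
  then show ?thesis unfolding Bf_def[abs_def] Qf_def by (simp add: has_bochner_integral_iff)
qed

lemma IB_int: "\<epsilon> \<in> {1..L} \<Longrightarrow> integrable (PP L) (\<lambda>z. Ind L \<epsilon> (fst z) * Bf L mk mv Rk Rv \<epsilon> z)"
proof -
  assume e: "\<epsilon> \<in> {1..L}"
  have m2: "Bf L mk mv Rk Rv \<epsilon> \<in> borel_measurable (PP L)" using Bf_int[OF e] by auto
  have m1: "(\<lambda>z. Ind L \<epsilon> (fst z)) \<in> borel_measurable (PP L)"
    using measurable_compose[OF measurable_fst Ind_meas[OF e]] .
  show ?thesis
  proof (rule Bochner_Integration.integrable_bound[OF Bf_int[OF e]])
    show "(\<lambda>z. Ind L \<epsilon> (fst z) * Bf L mk mv Rk Rv \<epsilon> z) \<in> borel_measurable (PP L)"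
      using borel_measurable_times[OF m1 m2] .
    show "AE z in PP L. norm (Ind L \<epsilon> (fst z) * Bf L mk mv Rk Rv \<epsilon> z) \<le> norm (Bf L mk mv Rk Rv \<epsilon> z)"
      by (rule AE_I2) (simp add: Ind_def)
  qed
qed

lemma am_integrand: "(let s = sigma_lin L (\<lambda>l. mk * fst z l + Rk * snd z l) in
      g_argmax L \<epsilon> (fst z) * (1 - 2 * mv * s \<epsilon> + (mv\<^sup>2 + Rv\<^sup>2) * (\<Sum>l\<in>{1..L}. (s l)\<^sup>2)))
   = real L * (Ind L \<epsilon> (fst z) * Bf L mk mv Rk Rv \<epsilon> z)"
  unfolding sigma_lin_def g_argmax_def Ind_def Amax_def Bf_def Let_def by (simp add: add.assoc)




definition Hf :: "nat \<Rightarrow> real \<Rightarrow> real \<Rightarrow> real \<Rightarrow> real \<Rightarrow> _ \<Rightarrow> real" where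
  "Hf L mk mv Rk Rv z = 1 - 2 * mv + (mv\<^sup>2 + Rv\<^sup>2) * Qf L mk Rk z - 2 * mv * mk * Amax L (fst z)
     - 2 * mv * Rk * (\<Sum>\<epsilon>\<in>{1..L}. Ind L \<epsilon> (fst z) * snd z \<epsilon>)"

lemma collapse:
  assumes L: "L \<ge> 1" and nt: "\<forall>i\<in>{1..L}. \<forall>j\<in>{1..L}. i \<noteq> j \<longrightarrow> fst z i \<noteq> fst z j"
  shows "(\<Sum>\<epsilon>\<in>{1..L}. Ind L \<epsilon> (fst z) * Bf L mk mv Rk Rv \<epsilon> z) = Hf L mk mv Rk Rv z"
proof -
  let ?x = "fst z"
  have "Amax L ?x \<in> ?x ` {1..L}" unfolding Amax_def using L by (intro Max_in) auto
  then obtain e0 where e0: "e0 \<in> {1..L}" "?x e0 = Amax L ?x" by auto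
  have I: "Ind L e ?x = (if e = e0 then 1 else 0)" if e: "e \<in> {1..L}" for e
  proof (cases "e = e0")
    case False
    then have "?x e \<noteq> ?x e0" using nt e e0(1) by blast
    then show ?thesis using False e0 unfolding Ind_def by simp
  qed (use e0 in \<open>simp add: Ind_def\<close>)
  have s1: "(\<Sum>\<epsilon>\<in>{1..L}. Ind L \<epsilon> ?x * Bf L mk mv Rk Rv \<epsilon> z) = (\<Sum>\<epsilon>\<in>{1..L}. if \<epsilon> = e0 then Bf L mk mv Rk Rv \<epsilon> z else 0)"
    by (intro sum.cong refl) (simp add: I)
  have s2: "(\<Sum>\<epsilon>\<in>{1..L}. Ind L \<epsilon> ?x * snd z \<epsilon>) = (\<Sum>\<epsilon>\<in>{1..L}. if \<epsilon> = e0 then snd z \<epsilon> else 0)"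
    by (intro sum.cong refl) (simp add: I)
  show ?thesis
    unfolding s1 Hf_def s2 using e0
    by (simp add: Bf_def Qf_def algebra_simps)
qed

lemma IY_hb: "\<epsilon> \<in> {1..L} \<Longrightarrow> has_bochner_integral (PP L) (\<lambda>z. Ind L \<epsilon> (fst z) * snd z \<epsilon>) 0"
  using PP_prod[OF Ind_int gx1, of \<epsilon> L \<epsilon>] gx1i[of \<epsilon> L] by (simp add: has_bochner_integral_iff)

lemma Hf_hb: assumes L: "L \<ge> 1"
  shows "has_bochner_integral (PP L) (Hf L mk mv Rk Rv)
     (1 - 2 * mv * (1 + mk * fmax L) + (mv\<^sup>2 + Rv\<^sup>2) * (real L * (1 + mk\<^sup>2 + Rk\<^sup>2)))"
proof -
  have A: "has_bochner_integral (PP L) (\<lambda>z. Amax L (fst z)) (fmax L)"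
    using PP_fst[OF Amax_int[OF L order.refl]] fmax_eq[of L] by simp
  have "has_bochner_integral (PP L) (\<lambda>z. 1 - 2 * mv + (mv\<^sup>2 + Rv\<^sup>2) * Qf L mk Rk z - 2 * mv * mk * Amax L (fst z)
     - 2 * mv * Rk * (\<Sum>\<epsilon>\<in>{1..L}. Ind L \<epsilon> (fst z) * snd z \<epsilon>))
     (1 - 2 * mv + (mv\<^sup>2 + Rv\<^sup>2) * (real L * (1 + mk\<^sup>2 + Rk\<^sup>2)) - 2 * mv * mk * fmax L
     - 2 * mv * Rk * (\<Sum>\<epsilon>\<in>{1..L}. 0))"
    by (intro has_bochner_integral_add has_bochner_integral_diff has_bochner_integral_mult_right
        has_bochner_integral_sum IY_hb Qf_hb A PC) auto
  then show ?thesis unfolding Hf_def[abs_def] by (simp add: algebra_simps)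
qed

lemma am_per_L:
  assumes L: "L \<ge> 1"
  shows "1 / real L * (\<Sum>\<epsilon>\<in>{1..L}. \<integral>z. (let s = sigma_lin L (\<lambda>l. mk * fst z l + Rk * snd z l) in
      g_argmax L \<epsilon> (fst z) * (1 - 2 * mv * s \<epsilon> + (mv\<^sup>2 + Rv\<^sup>2) * (\<Sum>l\<in>{1..L}. (s l)\<^sup>2))) \<partial>PP L)
   = 1 - 2 * mv * (1 + mk * fmax L) + (mv\<^sup>2 + Rv\<^sup>2) * (real L * (1 + mk\<^sup>2 + Rk\<^sup>2))"
proof -
  have "1 / real L * (\<Sum>\<epsilon>\<in>{1..L}. \<integral>z. (let s = sigma_lin L (\<lambda>l. mk * fst z l + Rk * snd z l) in
      g_argmax L \<epsilon> (fst z) * (1 - 2 * mv * s \<epsilon> + (mv\<^sup>2 + Rv\<^sup>2) * (\<Sum>l\<in>{1..L}. (s l)\<^sup>2))) \<partial>PP L)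
    = 1 / real L * (\<Sum>\<epsilon>\<in>{1..L}. \<integral>z. real L * (Ind L \<epsilon> (fst z) * Bf L mk mv Rk Rv \<epsilon> z) \<partial>PP L)"
    unfolding am_integrand ..
  also have "\<dots> = (\<Sum>\<epsilon>\<in>{1..L}. \<integral>z. Ind L \<epsilon> (fst z) * Bf L mk mv Rk Rv \<epsilon> z \<partial>PP L)"
    using L by (simp add: sum_distrib_left[symmetric])
  also have "\<dots> = (\<integral>z. (\<Sum>\<epsilon>\<in>{1..L}. Ind L \<epsilon> (fst z) * Bf L mk mv Rk Rv \<epsilon> z) \<partial>PP L)"
    by (rule Bochner_Integration.integral_sum[symmetric]) (rule IB_int)
  also have "\<dots> = integral\<^sup>L (PP L) (Hf L mk mv Rk Rv)"
  proof (rule integral_cong_AE)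
    show "(\<lambda>z. \<Sum>\<epsilon>\<in>{1..L}. Ind L \<epsilon> (fst z) * Bf L mk mv Rk Rv \<epsilon> z) \<in> borel_measurable (PP L)"
      by (intro borel_measurable_integrable Bochner_Integration.integrable_sum IB_int)
    show "Hf L mk mv Rk Rv \<in> borel_measurable (PP L)"
      by (rule borel_measurable_has_bochner_integral[OF Hf_hb[OF L]])
    show "AE z in PP L. (\<Sum>\<epsilon>\<in>{1..L}. Ind L \<epsilon> (fst z) * Bf L mk mv Rk Rv \<epsilon> z) = Hf L mk mv Rk Rv z"
      using AE_PP_fst[OF no_ties[of L]] by eventually_elim (rule collapse[OF L])
  qed
  also have "\<dots> = 1 - 2 * mv * (1 + mk * fmax L) + (mv\<^sup>2 + Rv\<^sup>2) * (real L * (1 + mk\<^sup>2 + Rk\<^sup>2))"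
    using Hf_hb[OF L] by (simp add: has_bochner_integral_iff)
  finally show ?thesis .
qed

lemma Etil_am:
  "Etil p Lbar sigma_lin g_argmax mk mv Rk Rv =
   EL p Lbar (\<lambda>L. 1 - 2 * mv * (1 + mk * fmax L) + (mv\<^sup>2 + Rv\<^sup>2) * (real L * (1 + mk\<^sup>2 + Rk\<^sup>2)))"
  unfolding Etil_def EL_def
  by (intro sum.cong refl arg_cong2[where f="(*)"] am_per_L) auto




lemma fmax_nonneg: "k \<ge> 1 \<Longrightarrow> fmax k \<ge> 0"
proof (induction k rule: dec_induct)
  case base then show ?case by (metis fmax_1 One_nat_def order_refl)
next
  case (step k) then show ?case using fmax_Suc[of k] Dm_nonneg[of k] by simp
qed

lemma Dm_anti_gen: assumes "1 \<le> n" "n \<le> k" shows "Dm k \<le> Dm n"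
  using assms(2)
proof (induction k rule: dec_induct)
  case base then show ?case by simp
next
  case (step k) then show ?case using Dm_anti[of k] assms(1) by simp
qed

lemma tangent:
  assumes n: "1 \<le> n" and k: "1 \<le> k"
  shows "fmax k \<le> fmax n + (real k - real n) * Dm n"
proof (cases "n \<le> k")
  case True
  then show ?thesis
  proof (induction k rule: dec_induct)
    case base then show ?case by simp
  next
    case (step k)
    have "fmax (Suc k) = fmax k + Dm k" using fmax_Suc[of k] step n by simp
    also have "\<dots> \<le> fmax n + (real k - real n) * Dm n + Dm n"
      using step Dm_anti_gen[of n k] n by simp
    finally show ?case by (simp add: algebra_simps)
  qed
next
  case False
  then have kn: "k \<le> n" by simp
  show ?thesis using kn
  proof (induction k rule: inc_induct)
    case base then show ?case by simp
  next
    case (step m)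
    have m1: "1 \<le> m" using step k by simp
    have "fmax m = fmax (Suc m) - Dm m" using fmax_Suc[OF m1] by simp
    also have "\<dots> \<le> fmax n + (real (Suc m) - real n) * Dm n - Dm n"
      using step.IH Dm_anti_gen[of m n] m1 step.hyps by simp
    finally show ?case by (simp add: algebra_simps)
  qed
qed

context
  fixes p :: "nat \<Rightarrow> real" and Lbar :: nat
  assumes nonneg: "\<And>L. L \<in> {1..Lbar} \<Longrightarrow> p L \<ge> 0"
    and total: "(\<Sum>L\<in>{1..Lbar}. p L) = 1"
begin

lemma EL_lin: "EL p Lbar (\<lambda>L. a + b * h L + d * g L) = a + b * EL p Lbar h + d * EL p Lbar g"
proof -
  have "\<And>L. p L * (a + b * h L + d * g L) = a * p L + b * (p L * h L) + d * (p L * g L)"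
    by (simp add: algebra_simps)
  then show ?thesis unfolding EL_def
    using total by (simp add: sum.distrib sum_distrib_left[symmetric] sum_distrib_right[symmetric])
qed

lemma EL_mono: "(\<And>L. L \<in> {1..Lbar} \<Longrightarrow> h L \<le> g L) \<Longrightarrow> EL p Lbar h \<le> EL p Lbar g"
  unfolding EL_def by (intro sum_mono mult_left_mono nonneg) auto

lemma EL_const: "EL p Lbar (\<lambda>_. c) = c"
  unfolding EL_def using total by (simp add: sum_distrib_right[symmetric])

lemma M_ge1: "EL p Lbar real \<ge> 1"
  using EL_mono[of "\<lambda>_. 1" real] EL_const[of 1] by simp

lemma F_nonneg: "EL p Lbar fmax \<ge> 0"
  using EL_mono[of "\<lambda>_. 0" fmax] EL_const[of 0] fmax_nonneg by simp

lemma jensen: "EL p Lbar fmax \<le> fmax_interp (EL p Lbar real)"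
proof -
  define M where "M = EL p Lbar real"
  define n where "n = nat \<lfloor>M\<rfloor>"
  have M1: "M \<ge> 1" unfolding M_def by (rule M_ge1)
  have n1: "n \<ge> 1" unfolding n_def using M1 by linarith
  have rn: "real n = of_int \<lfloor>M\<rfloor>" unfolding n_def using M1 by simp
  have "fmax_interp M = fmax n + (M - real n) * Dm n"
    unfolding fmax_interp_def n_def[symmetric] Let_def using fmax_Suc[OF n1] by simp
  moreover have "EL p Lbar fmax \<le> EL p Lbar (\<lambda>L. (fmax n - real n * Dm n) + Dm n * real L + 0 * real L)"
    by (intro EL_mono) (use tangent[OF n1] in \<open>auto simp: algebra_simps\<close>)
  moreover have "EL p Lbar (\<lambda>L. (fmax n - real n * Dm n) + Dm n * real L + 0 * real L) = fmax n + (M - real n) * Dm n"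
    unfolding EL_lin M_def by (simp add: algebra_simps)
  ultimately show ?thesis unfolding M_def by simp
qed

end



context
  fixes p :: "nat \<Rightarrow> real" and Lbar :: nat
  assumes nonneg: "\<And>L. L \<in> {1..Lbar} \<Longrightarrow> p L \<ge> 0"
    and total: "(\<Sum>L\<in>{1..Lbar}. p L) = 1"
begin

lemma EL_cong: "(\<And>L. L \<in> {1..Lbar} \<Longrightarrow> h L = g L) \<Longrightarrow> EL p Lbar h = EL p Lbar g"
  unfolding EL_def by (intro sum.cong) auto

lemma Etil_am':
  "Etil p Lbar sigma_lin g_argmax mk mv Rk Rv =
   1 - 2 * mv + (- 2 * mv * mk) * EL p Lbar fmax + ((mv\<^sup>2 + Rv\<^sup>2) * (1 + mk\<^sup>2 + Rk\<^sup>2)) * EL p Lbar real"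
proof -
  have "(\<lambda>L. 1 - 2 * mv * (1 + mk * fmax L) + (mv\<^sup>2 + Rv\<^sup>2) * (real L * (1 + mk\<^sup>2 + Rk\<^sup>2)))
     = (\<lambda>L. (1 - 2 * mv) + (- 2 * mv * mk) * fmax L + ((mv\<^sup>2 + Rv\<^sup>2) * (1 + mk\<^sup>2 + Rk\<^sup>2)) * real L)"
    by (rule ext) (simp add: algebra_simps)
  note eq = this
  have "EL p Lbar (\<lambda>L. (1 - 2 * mv) + (- 2 * mv * mk) * fmax L + ((mv\<^sup>2 + Rv\<^sup>2) * (1 + mk\<^sup>2 + Rk\<^sup>2)) * real L)
    = (1 - 2 * mv) + (- 2 * mv * mk) * EL p Lbar fmax + ((mv\<^sup>2 + Rv\<^sup>2) * (1 + mk\<^sup>2 + Rk\<^sup>2)) * EL p Lbar real"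
    by (rule EL_lin[OF nonneg total])
  then show ?thesis unfolding Etil_am eq by simp
qed

lemma Etil_lo':
  "Etil p Lbar sigma_lin g_one mk mv Rk Rv =
   1 - 2 * mv + ((mv\<^sup>2 + Rv\<^sup>2) * (1 + mk\<^sup>2 + Rk\<^sup>2)) * EL p Lbar real"
proof -
  have "(\<lambda>L. 1 - 2 * mv + (mv\<^sup>2 + Rv\<^sup>2) * (real L * (1 + mk\<^sup>2 + Rk\<^sup>2)))
     = (\<lambda>L. (1 - 2 * mv) + ((mv\<^sup>2 + Rv\<^sup>2) * (1 + mk\<^sup>2 + Rk\<^sup>2)) * real L + 0 * real L)"
    by (rule ext) (simp add: algebra_simps)
  note eq = this
  have "EL p Lbar (\<lambda>L. (1 - 2 * mv) + ((mv\<^sup>2 + Rv\<^sup>2) * (1 + mk\<^sup>2 + Rk\<^sup>2)) * real L + 0 * real L)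
    = (1 - 2 * mv) + ((mv\<^sup>2 + Rv\<^sup>2) * (1 + mk\<^sup>2 + Rk\<^sup>2)) * EL p Lbar real + 0 * EL p Lbar real"
    by (rule EL_lin[OF nonneg total])
  then show ?thesis unfolding Etil_lin_one eq by simp
qed

lemma cK: fixes mv Rv mk Rk :: real shows "(mv\<^sup>2 + Rv\<^sup>2) * (1 + mk\<^sup>2 + Rk\<^sup>2) \<ge> mv\<^sup>2 * (1 + mk\<^sup>2)"
  by (intro mult_mono) auto

lemma Eam: "Eopt p Lbar sigma_lin g_argmax = 1 - (1 + (EL p Lbar fmax)\<^sup>2) / EL p Lbar real"
proof -
  define M where "M = EL p Lbar real"
  define F where "F = EL p Lbar fmax"
  have M1: "M \<ge> 1" unfolding M_def by (rule M_ge1[OF nonneg total])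
  show ?thesis unfolding Eopt_def M_def[symmetric] F_def[symmetric]
  proof (rule cInf_eq_minimum)
    have "Etil p Lbar sigma_lin g_argmax F (1 / M) 0 0 = 1 - (1 + F\<^sup>2) / M"
      unfolding Etil_am' M_def[symmetric] F_def[symmetric] using M1
      by (simp add: field_simps power2_eq_square)
    then show "1 - (1 + F\<^sup>2) / M \<in> {Etil p Lbar sigma_lin g_argmax mk mv Rk Rv |mk mv Rk Rv. True}"
      by (metis (mono_tags, lifting) mem_Collect_eq)
  next
    fix x assume "x \<in> {Etil p Lbar sigma_lin g_argmax mk mv Rk Rv |mk mv Rk Rv. True}"
    then obtain mk mv Rk Rv where x: "x = Etil p Lbar sigma_lin g_argmax mk mv Rk Rv" by blast
    have x': "x = 1 - 2 * mv + (- 2 * mv * mk) * F + ((mv\<^sup>2 + Rv\<^sup>2) * (1 + mk\<^sup>2 + Rk\<^sup>2)) * M"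
      unfolding x Etil_am' M_def F_def ..
    have "((mv\<^sup>2 + Rv\<^sup>2) * (1 + mk\<^sup>2 + Rk\<^sup>2)) * M \<ge> (mv\<^sup>2 * (1 + mk\<^sup>2)) * M"
      using cK M1 by (intro mult_right_mono) auto
    moreover
    have id: "M * (1 - 2 * mv + (- 2 * mv * mk) * F + (mv\<^sup>2 * (1 + mk\<^sup>2)) * M) - (M - (1 + F\<^sup>2))
      = (mv * M - 1)\<^sup>2 + (mv * M * mk - F)\<^sup>2"
      by (simp add: power2_eq_square algebra_simps)
    have "M - (1 + F\<^sup>2) \<le> M * (1 - 2 * mv + (- 2 * mv * mk) * F + (mv\<^sup>2 * (1 + mk\<^sup>2)) * M)"
      using id by (smt (verit) zero_le_power2)
    then have "(M - (1 + F\<^sup>2)) / M \<le> 1 - 2 * mv + (- 2 * mv * mk) * F + (mv\<^sup>2 * (1 + mk\<^sup>2)) * M"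
      using M1 by (simp add: divide_le_eq mult.commute)
    moreover have "(M - (1 + F\<^sup>2)) / M = 1 - (1 + F\<^sup>2) / M" using M1 by (simp add: field_simps)
    ultimately show "1 - (1 + F\<^sup>2) / M \<le> x" unfolding x' by linarith
  qed
qed

lemma Elo: "Eopt p Lbar sigma_lin g_one = 1 - 1 / EL p Lbar real"
proof -
  define M where "M = EL p Lbar real"
  have M1: "M \<ge> 1" unfolding M_def by (rule M_ge1[OF nonneg total])
  show ?thesis unfolding Eopt_def M_def[symmetric]
  proof (rule cInf_eq_minimum)
    have "Etil p Lbar sigma_lin g_one 0 (1 / M) 0 0 = 1 - 1 / M"
      unfolding Etil_lo' M_def[symmetric] using M1
      by (simp add: field_simps power2_eq_square)
    then show "1 - 1 / M \<in> {Etil p Lbar sigma_lin g_one mk mv Rk Rv |mk mv Rk Rv. True}"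
      by (metis (mono_tags, lifting) mem_Collect_eq)
  next
    fix x assume "x \<in> {Etil p Lbar sigma_lin g_one mk mv Rk Rv |mk mv Rk Rv. True}"
    then obtain mk mv Rk Rv where x: "x = Etil p Lbar sigma_lin g_one mk mv Rk Rv" by blast
    have x': "x = 1 - 2 * mv + ((mv\<^sup>2 + Rv\<^sup>2) * (1 + mk\<^sup>2 + Rk\<^sup>2)) * M"
      unfolding x Etil_lo' M_def ..
    have "((mv\<^sup>2 + Rv\<^sup>2) * (1 + mk\<^sup>2 + Rk\<^sup>2)) * M \<ge> mv\<^sup>2 * M"
    proof (rule mult_right_mono)
      have "mv\<^sup>2 * 1 \<le> mv\<^sup>2 * (1 + mk\<^sup>2)" by (intro mult_left_mono) auto
      then show "mv\<^sup>2 \<le> (mv\<^sup>2 + Rv\<^sup>2) * (1 + mk\<^sup>2 + Rk\<^sup>2)" using cK[of mv mk Rv Rk] by simp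
    qed (use M1 in simp)
    moreover
    have id: "M * (1 - 2 * mv + mv\<^sup>2 * M) - (M - 1) = (mv * M - 1)\<^sup>2"
      by (simp add: power2_eq_square algebra_simps)
    have "M - 1 \<le> M * (1 - 2 * mv + mv\<^sup>2 * M)"
      using id by (smt (verit) zero_le_power2)
    then have "(M - 1) / M \<le> 1 - 2 * mv + mv\<^sup>2 * M"
      using M1 by (simp add: divide_le_eq mult.commute)
    moreover have "(M - 1) / M = 1 - 1 / M" using M1 by (simp add: field_simps)
    ultimately show "1 - 1 / M \<le> x" unfolding x' by linarith
  qed
qed

lemma Esm: "Eopt p Lbar sigma_softmax g_one = 1 - EL p Lbar (\<lambda>L. 1 / real L)"
  unfolding Eopt_def
proof (rule cInf_eq_minimum)
  have "Etil p Lbar sigma_softmax g_one 0 1 0 0 = EL p Lbar (\<lambda>L. 1 + (-1) * (1 / real L) + 0 * real L)"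
    unfolding Etil_sm
  proof (intro EL_cong)
    fix L :: nat assume L: "L \<in> {1..Lbar}"
    have "1 / real L * (\<Sum>\<epsilon>\<in>{1..L}. integral\<^sup>L (PP L) (Gsm L 0 1 0 0 \<epsilon>)) = 1 - 1 / real L"
      by (rule sm_val) (use L in simp)
    then show "1 / real L * (\<Sum>\<epsilon>\<in>{1..L}. integral\<^sup>L (PP L) (Gsm L 0 1 0 0 \<epsilon>)) = 1 + (-1) * (1 / real L) + 0 * real L"
      by simp
  qed
  also have "\<dots> = 1 + (-1) * EL p Lbar (\<lambda>L. 1 / real L) + 0 * EL p Lbar real"
    by (rule EL_lin[OF nonneg total])
  also have "\<dots> = 1 - EL p Lbar (\<lambda>L. 1 / real L)" by simp
  finally show "1 - EL p Lbar (\<lambda>L. 1 / real L) \<in> {Etil p Lbar sigma_softmax g_one mk mv Rk Rv |mk mv Rk Rv. True}"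
    by (metis (mono_tags, lifting) mem_Collect_eq)
next
  fix x assume "x \<in> {Etil p Lbar sigma_softmax g_one mk mv Rk Rv |mk mv Rk Rv. True}"
  then obtain mk mv Rk Rv where x: "x = Etil p Lbar sigma_softmax g_one mk mv Rk Rv" by blast
  have "EL p Lbar (\<lambda>L. 1 + (-1) * (1 / real L) + 0 * real L) \<le> x"
    unfolding x Etil_sm by (intro EL_mono[OF nonneg total]) (use sm_lower in auto)
  moreover have "EL p Lbar (\<lambda>L. 1 + (-1) * (1 / real L) + 0 * real L) = 1 + (-1) * EL p Lbar (\<lambda>L. 1 / real L) + 0 * EL p Lbar real"
    by (rule EL_lin[OF nonneg total])
  ultimately show "1 - EL p Lbar (\<lambda>L. 1 / real L) \<le> x" by simp
qed

lemma inv_mean: "EL p Lbar (\<lambda>L. 1 / real L) \<ge> 1 / EL p Lbar real"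
proof -
  define M where "M = EL p Lbar real"
  have M1: "M \<ge> 1" unfolding M_def by (rule M_ge1[OF nonneg total])
  have "EL p Lbar (\<lambda>L. 2 / M + (- 1 / M\<^sup>2) * real L + 0 * real L) \<le> EL p Lbar (\<lambda>L. 1 / real L)"
  proof (intro EL_mono[OF nonneg total])
    fix L assume L: "L \<in> {1..Lbar}"
    then have L1: "real L \<ge> 1" by simp
    have "0 \<le> (real L - M)\<^sup>2 / (real L * M\<^sup>2)" using L1 M1 by simp
    also have "(real L - M)\<^sup>2 / (real L * M\<^sup>2) = 1 / real L - (2 / M + (- 1 / M\<^sup>2) * real L)"
      using L1 M1 by (simp add: field_simps power2_eq_square)
    finally show "2 / M + (- 1 / M\<^sup>2) * real L + 0 * real L \<le> 1 / real L" by simp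
  qed
  moreover have "EL p Lbar (\<lambda>L. 2 / M + (- 1 / M\<^sup>2) * real L + 0 * real L) = 2 / M + (- 1 / M\<^sup>2) * M + 0 * M"
    unfolding M_def by (rule EL_lin[OF nonneg total])
  moreover have "2 / M + (- 1 / M\<^sup>2) * M + 0 * M = 1 / M" using M1 by (simp add: field_simps power2_eq_square)
  ultimately show ?thesis unfolding M_def by simp
qed

lemma inv_mean_eq:
  assumes v: "EL p Lbar (\<lambda>L. (real L - EL p Lbar real)\<^sup>2) = 0"
  shows "EL p Lbar (\<lambda>L. 1 / real L) = 1 / EL p Lbar real"
proof -
  define M where "M = EL p Lbar real"
  have M1: "M \<ge> 1" unfolding M_def by (rule M_ge1[OF nonneg total])
  have "EL p Lbar (\<lambda>L. 1 / real L) \<le> EL p Lbar (\<lambda>L. 2 / M + (- 1 / M\<^sup>2) * real L + (1 / M\<^sup>2) * (real L - M)\<^sup>2)"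
  proof (intro EL_mono[OF nonneg total])
    fix L assume L: "L \<in> {1..Lbar}"
    then have L1: "real L \<ge> 1" by simp
    have "(real L - M)\<^sup>2 / (real L * M\<^sup>2) \<le> (real L - M)\<^sup>2 / (1 * M\<^sup>2)"
      using L1 M1 by (intro divide_left_mono mult_right_mono) auto
    moreover have "(real L - M)\<^sup>2 / (real L * M\<^sup>2) = 1 / real L - (2 / M + (- 1 / M\<^sup>2) * real L)"
      using L1 M1 by (simp add: field_simps power2_eq_square)
    ultimately show "1 / real L \<le> 2 / M + (- 1 / M\<^sup>2) * real L + (1 / M\<^sup>2) * (real L - M)\<^sup>2" by simp
  qed
  also have "\<dots> = 2 / M + (- 1 / M\<^sup>2) * M + (1 / M\<^sup>2) * EL p Lbar (\<lambda>L. (real L - M)\<^sup>2)"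
    unfolding M_def by (rule EL_lin[OF nonneg total])
  also have "\<dots> = 2 / M + (- 1 / M\<^sup>2) * M + (1 / M\<^sup>2) * 0"
    using v unfolding M_def by simp
  also have "\<dots> = 1 / M" using M1 by (simp add: field_simps power2_eq_square)
  finally show ?thesis using inv_mean unfolding M_def by linarith
qed

end


theorem corollary3:
  fixes p :: "nat \<Rightarrow> real" and Lbar :: nat
  assumes nonneg: "\<And>L. L \<in> {1..Lbar} \<Longrightarrow> p L \<ge> 0"
    and total: "(\<Sum>L\<in>{1..Lbar}. p L) = 1"
  shows
    "Eopt p Lbar sigma_lin g_argmax
        = 1 - (1 + (EL p Lbar fmax)\<^sup>2) / EL p Lbar real
     \<and> Eopt p Lbar sigma_lin g_argmax
        \<ge> 1 - (1 + (fmax_interp (EL p Lbar real))\<^sup>2) / EL p Lbar real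
     \<and> Eopt p Lbar sigma_lin g_one = 1 - 1 / EL p Lbar real
     \<and> Eopt p Lbar sigma_softmax g_one = 1 - EL p Lbar (\<lambda>L. 1 / real L)
     \<and> Eopt p Lbar sigma_lin g_one \<ge> Eopt p Lbar sigma_softmax g_one
     \<and> (EL p Lbar (\<lambda>L. (real L - EL p Lbar real)\<^sup>2) = 0
          \<longrightarrow> Eopt p Lbar sigma_lin g_one = Eopt p Lbar sigma_softmax g_one)"
proof -
  have M1: "EL p Lbar real \<ge> 1" by (rule M_ge1[OF nonneg total])
  have F0: "EL p Lbar fmax \<ge> 0" by (rule F_nonneg[OF nonneg total])
  have J: "EL p Lbar fmax \<le> fmax_interp (EL p Lbar real)" by (rule jensen[OF nonneg total])
  have e1: "Eopt p Lbar sigma_lin g_argmax = 1 - (1 + (EL p Lbar fmax)\<^sup>2) / EL p Lbar real"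
    by (rule Eam[OF nonneg total])
  have sq: "(EL p Lbar fmax)\<^sup>2 \<le> (fmax_interp (EL p Lbar real))\<^sup>2"
    using F0 J by (intro power_mono) auto
  have "(1 + (EL p Lbar fmax)\<^sup>2) / EL p Lbar real \<le> (1 + (fmax_interp (EL p Lbar real))\<^sup>2) / EL p Lbar real"
    using sq M1 by (intro divide_right_mono) auto
  then have e2: "Eopt p Lbar sigma_lin g_argmax \<ge> 1 - (1 + (fmax_interp (EL p Lbar real))\<^sup>2) / EL p Lbar real"
    using e1 by linarith
  have e3: "Eopt p Lbar sigma_lin g_one = 1 - 1 / EL p Lbar real" by (rule Elo[OF nonneg total])
  have e4: "Eopt p Lbar sigma_softmax g_one = 1 - EL p Lbar (\<lambda>L. 1 / real L)" by (rule Esm[OF nonneg total])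
  have e5: "Eopt p Lbar sigma_lin g_one \<ge> Eopt p Lbar sigma_softmax g_one"
    using e3 e4 inv_mean[OF nonneg total] by linarith
  have e6: "EL p Lbar (\<lambda>L. (real L - EL p Lbar real)\<^sup>2) = 0
          \<longrightarrow> Eopt p Lbar sigma_lin g_one = Eopt p Lbar sigma_softmax g_one"
    using e3 e4 inv_mean_eq[OF nonneg total] by simp
  show ?thesis using e1 e2 e3 e4 e5 e6 by blast
qed

end
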